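(* Consider the chain pendulum on a cart described in the context, and an equilibrium specified by $s=(s_1,\dots,s_n)\in\{1,-1\}^n$, namely $q_i=s_ie_3$, $\omega_i=0$ for all $i$, and $x=0$, $\dot x=0$. Parametrize perturbations by $x=\epsilon\,\delta x$, $q_i=\exp(\epsilon\hat\xi_i)s_ie_3$, $\omega_i=\epsilon\,\delta\omega_i$ with $\delta x\in\mathbb{R}^2$, $\xi_i,\delta\omega_i\in\mathbb{R}^3$, $\xi_i\cdot e_3=\delta\omega_i\cdot e_3=0$, and set $\mathbf{x}_q=[C^T\xi_1;\dots;C^T\xi_n]\in\mathbb{R}^{2n}$, $\mathbf{x}=[\delta x;\mathbf{x}_q]\in\mathbb{R}^{2n+2}$. Then the linearization of the equations of motion about this equilibrium is \[ \mathbf{M}\ddot{\mathbf{x}}+\mathbf{G}\mathbf{x}=\mathbf{B}u,\qquad \mathbf{M}=\begin{bmatrix}\mathbf{M}_{xx}&\mathbf{M}_{xq}\\ \mathbf{M}_{qx}&\mathbf{M}_{qq}\end{bmatrix},\quad \mathbf{G}=\begin{bmatrix}0_{2}&0_{2\times2n}\\0_{2n\times2}&\mathbf{G}_{qq}\end{bmatrix},\quad \mathbf{B}=\begin{bmatrix}I_2\\0_{2n\times2}\end{bmatrix}, \] where $\mathbf{M}_{xx}=M_{00}I_2$, $\mathbf{M}_{xq}=\big[-s_1M_{01}\hat e_3C,\ -s_2M_{02}\hat e_3C,\ \dots,\ -s_nM_{0n}\hat e_3C\big]\in\mathbb{R}^{2\times2n}$, $\mathbf{M}_{qx}=\mathbf{M}_{xq}^T$,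 $\mathbf{M}_{qq}\in\mathbb{R}^{2n\times2n}$ is the block matrix whose $(i,j)$ $2\times2$ block is $s_is_jM_{ij}I_2$ (so the diagonal blocks are $M_{ii}I_2$), and $\mathbf{G}_{qq}=\mathrm{diag}\big[s_1\big(\sum_{a=1}^n m_a\big)g\,l_1I_2,\ \dots,\ s_i\big(\sum_{a=i}^n m_a\big)g\,l_iI_2,\ \dots,\ s_nm_ng\,l_nI_2\big]$.
   Context: Let $n\ge1$. $\mathsf{S}^2=\{q\in\mathbb{R}^3:\|q\|=1\}$. Let $e_1,e_2,e_3$ be the standard basis of $\mathbb{R}^3$, with $e_3$ the direction of gravity, $g>0$ the gravitational acceleration, and $C=[e_1,e_2]\in\mathbb{R}^{3\times2}$. For $y\in\mathbb{R}^3$, $\hat y$ denotes the $3\times3$ skew-symmetric matrix with $\hat y z=y\times z$; $\exp$ is the matrix exponential. A cart of mass $m>0$ with position $x\in\mathbb{R}^2$ moves in a horizontal plane under a control force $u\in\mathbb{R}^2$; a serial chain of $n$ links with spherical joints is attached, link $i$ having length $l_i>0$, direction $q_i\in\mathsf{S}^2$, point mass $m_i>0$ at its outboard end, and angular velocity $\omega_i\in\mathbb{R}^3$ with $\omega_i\cdot q_i=0$. Define $M_{00}=m+\sum_{i=1}^n m_i$, $M_{0i}=\big(\sum_{a=i}^n m_a\big)l_iC^T\in\mathbb{R}^{2\times3}$, $M_{i0}=M_{0i}^T$, $M_{ij}=\big(\sum_{a=\max\{i,j\}}^n m_a\big)l_il_j$. The equations of motion (the Euler–Lagrange equations for the Lagrangian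 $L=\tfrac12M_{00}\|\dot x\|^2+\dot x\cdot\sum_iM_{0i}\dot q_i+\tfrac12\sum_{i,j}M_{ij}\dot q_i\cdot\dot q_j+\sum_i(\sum_{a=i}^n m_a)g\,l_i\,e_3\cdot q_i$ with force $u$ on the cart) are $M_{00}\ddot x-\sum_{j=1}^n M_{0j}\hat q_j\dot\omega_j=\sum_{j=1}^n M_{0j}\|\omega_j\|^2q_j+u$; for $i=1,\dots,n$: $\hat q_iM_{i0}\ddot x+M_{ii}\dot\omega_i-\sum_{j\neq i}M_{ij}\hat q_i\hat q_j\dot\omega_j=\sum_{j\neq i}M_{ij}\|\omega_j\|^2\hat q_iq_j+\big(\sum_{a=i}^n m_a\big)g\,l_i\,\hat q_ie_3$; and $\dot q_i=\omega_i\times q_i$. *)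

theory Defs
  imports "HOL-Analysis.Analysis"
begin

definition e1 :: "real^3" where "e1 = axis 1 1"
definition e2 :: "real^3" where "e2 = axis 2 1"
definition e3 :: "real^3" where "e3 = axis 3 1"

text \<open>C = [e1, e2], a 3x2 matrix (rows indexed by 3, columns by 2).\<close>
definition Cmat :: "real^2^3" where
  "Cmat = (\<chi> i j. if (i = 1 \<and> j = 1) \<or> (i = 2 \<and> j = 2) then 1 else 0)"

definition hat :: "real^3 \<Rightarrow> real^3^3" where
  "hat y = matrix (\<lambda>z. cross3 y z)"

fun mpow :: "real^3^3 \<Rightarrow> nat \<Rightarrow> real^3^3" where
  "mpow A 0 = mat 1"
| "mpow A (Suc k) = A ** mpow A k"

definition mexp :: "real^3^3 \<Rightarrow> real^3^3" where
  "mexp A = (\<Sum>k. (1 / fact k) *\<^sub>R mpow A k)"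

text \<open>m0: cart mass; m i, l i (i = 1..n): link point masses and lengths.\<close>
definition Msum :: "nat \<Rightarrow> (nat \<Rightarrow> real) \<Rightarrow> nat \<Rightarrow> real" where
  "Msum n m i = (\<Sum>a = i..n. m a)"

definition M00 :: "nat \<Rightarrow> real \<Rightarrow> (nat \<Rightarrow> real) \<Rightarrow> real" where
  "M00 n m0 m = m0 + (\<Sum>i = 1..n. m i)"

definition M0 :: "nat \<Rightarrow> (nat \<Rightarrow> real) \<Rightarrow> (nat \<Rightarrow> real) \<Rightarrow> nat \<Rightarrow> real^3^2" where
  "M0 n m l i = (Msum n m i * l i) *\<^sub>R transpose Cmat"

definition Mi0 :: "nat \<Rightarrow> (nat \<Rightarrow> real) \<Rightarrow> (nat \<Rightarrow> real) \<Rightarrow> nat \<Rightarrow> real^2^3" where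
  "Mi0 n m l i = transpose (M0 n m l i)"

definition Mij :: "nat \<Rightarrow> (nat \<Rightarrow> real) \<Rightarrow> (nat \<Rightarrow> real) \<Rightarrow> nat \<Rightarrow> nat \<Rightarrow> real" where
  "Mij n m l i j = Msum n m (max i j) * l i * l j"

text \<open>Cart equation: arguments are the values at one time instant of
  xdd (= second derivative of x), q, omega, omegad (= derivative of omega), u.\<close>
definition res_cart ::
  "nat \<Rightarrow> real \<Rightarrow> (nat \<Rightarrow> real) \<Rightarrow> (nat \<Rightarrow> real) \<Rightarrow>
   real^2 \<Rightarrow> (nat \<Rightarrow> real^3) \<Rightarrow> (nat \<Rightarrow> real^3) \<Rightarrow> (nat \<Rightarrow> real^3) \<Rightarrow> real^2 \<Rightarrow> real^2" where
  "res_cart n m0 m l xdd q w wd u =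
     M00 n m0 m *\<^sub>R xdd - (\<Sum>j = 1..n. M0 n m l j *v (hat (q j) *v wd j))
     - ((\<Sum>j = 1..n. (norm (w j))\<^sup>2 *\<^sub>R (M0 n m l j *v q j)) + u)"

definition res_link ::
  "nat \<Rightarrow> (nat \<Rightarrow> real) \<Rightarrow> (nat \<Rightarrow> real) \<Rightarrow> real \<Rightarrow> nat \<Rightarrow>
   real^2 \<Rightarrow> (nat \<Rightarrow> real^3) \<Rightarrow> (nat \<Rightarrow> real^3) \<Rightarrow> (nat \<Rightarrow> real^3) \<Rightarrow> real^3" where
  "res_link n m l g i xdd q w wd =
     hat (q i) *v (Mi0 n m l i *v xdd) + Mij n m l i i *\<^sub>R wd i
     - (\<Sum>j \<in> {1..n} - {i}. Mij n m l i j *\<^sub>R (hat (q i) *v (hat (q j) *v wd j)))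
     - ((\<Sum>j \<in> {1..n} - {i}. (Mij n m l i j * (norm (w j))\<^sup>2) *\<^sub>R (hat (q i) *v q j))
        + (Msum n m i * g * l i) *\<^sub>R (hat (q i) *v e3))"

definition res_kin :: "real^3 \<Rightarrow> real^3 \<Rightarrow> real^3 \<Rightarrow> real^3" where
  "res_kin qd w q = qd - cross3 w q"

text \<open>Block row/column 0 corresponds to delta x, block i (1..n) to C^T xi_i.\<close>
definition Mblk :: "nat \<Rightarrow> real \<Rightarrow> (nat \<Rightarrow> real) \<Rightarrow> (nat \<Rightarrow> real) \<Rightarrow> (nat \<Rightarrow> real)
                    \<Rightarrow> nat \<Rightarrow> nat \<Rightarrow> real^2^2" where
  "Mblk n m0 m l s r c =
     (if r = 0 \<and> c = 0 then M00 n m0 m *\<^sub>R mat 1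
      else if r = 0 then (- s c) *\<^sub>R (M0 n m l c ** hat e3 ** Cmat)
      else if c = 0 then transpose ((- s r) *\<^sub>R (M0 n m l r ** hat e3 ** Cmat))
      else (s r * s c * Mij n m l r c) *\<^sub>R mat 1)"

definition Gblk :: "nat \<Rightarrow> (nat \<Rightarrow> real) \<Rightarrow> (nat \<Rightarrow> real) \<Rightarrow> (nat \<Rightarrow> real) \<Rightarrow> real
                    \<Rightarrow> nat \<Rightarrow> nat \<Rightarrow> real^2^2" where
  "Gblk n m l s g r c =
     (if r = c \<and> r \<noteq> 0 then (s r * Msum n m r * g * l r) *\<^sub>R mat 1 else 0)"

definition Bblk :: "nat \<Rightarrow> real^2^2" where
  "Bblk r = (if r = 0 then mat 1 else 0)"

definition Xe :: "(real \<Rightarrow> real^2) \<Rightarrow> real \<Rightarrow> real \<Rightarrow> real^2" where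
  "Xe dx \<epsilon> t = \<epsilon> *\<^sub>R dx t"

definition Qe :: "(nat \<Rightarrow> real) \<Rightarrow> (nat \<Rightarrow> real \<Rightarrow> real^3) \<Rightarrow> real \<Rightarrow> nat \<Rightarrow> real \<Rightarrow> real^3" where
  "Qe s xi \<epsilon> i t = mexp (\<epsilon> *\<^sub>R hat (xi i t)) *v (s i *\<^sub>R e3)"

definition We :: "(nat \<Rightarrow> real \<Rightarrow> real^3) \<Rightarrow> real \<Rightarrow> nat \<Rightarrow> real \<Rightarrow> real^3" where
  "We dw \<epsilon> i t = \<epsilon> *\<^sub>R dw i t"

definition Ue :: "(real \<Rightarrow> real^2) \<Rightarrow> real \<Rightarrow> real \<Rightarrow> real^2" where
  "Ue du \<epsilon> t = \<epsilon> *\<^sub>R du t"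

definition R_cart where
  "R_cart n m0 m l s dx xi dw du \<epsilon> t =
     res_cart n m0 m l
       (vector_derivative (\<lambda>\<tau>. vector_derivative (\<lambda>\<sigma>. Xe dx \<epsilon> \<sigma>) (at \<tau>)) (at t))
       (\<lambda>j. Qe s xi \<epsilon> j t) (\<lambda>j. We dw \<epsilon> j t)
       (\<lambda>j. vector_derivative (\<lambda>\<tau>. We dw \<epsilon> j \<tau>) (at t))
       (Ue du \<epsilon> t)"

definition R_link where
  "R_link n m l g s dx xi dw \<epsilon> i t =
     res_link n m l g i
       (vector_derivative (\<lambda>\<tau>. vector_derivative (\<lambda>\<sigma>. Xe dx \<epsilon> \<sigma>) (at \<tau>)) (at t))
       (\<lambda>j. Qe s xi \<epsilon> j t) (\<lambda>j. We dw \<epsilon> j t)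
       (\<lambda>j. vector_derivative (\<lambda>\<tau>. We dw \<epsilon> j \<tau>) (at t))"

definition R_kin where
  "R_kin s xi dw \<epsilon> i t =
     res_kin (vector_derivative (\<lambda>\<tau>. Qe s xi \<epsilon> i \<tau>) (at t)) (We dw \<epsilon> i t) (Qe s xi \<epsilon> i t)"

end

theory Submission
  imports Defs
begin


lemma bb_cross: "bounded_bilinear cross3"
  using bilinear_conv_bounded_bilinear bilinear_cross by blast

lemma lin_cross: "linear (cross3 y)"
  using bilinear_cross unfolding bilinear_def by blast

lemma hat_mv: "hat y *v z = cross3 y z"
  by (simp add: hat_def matrix_def matrix_vector_mult_def cross3_def vec_eq_iff forall_3 sum_3 axis_def vector_def)

lemma norm_cross_le: "norm (cross3 x y) \<le> norm x * norm y"
proof -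
  have "(norm (cross3 x y))\<^sup>2 \<le> (norm x * norm y)\<^sup>2" using norm_cross_dot[of x y] zero_le_power2[of "x \<bullet> y"] by linarith
  thus ?thesis by (rule power2_le_imp_le) simp
qed

lemma bl_mvr: "bounded_linear (\<lambda>M::real^3^3. M *v v)"
  by (rule linear_conv_bounded_linear[THEN iffD1])
     (auto intro!: linearI simp: matrix_vector_mult_add_rdistrib scaleR_matrix_vector_assoc)

fun crs :: "real^3 \<Rightarrow> nat \<Rightarrow> real^3 \<Rightarrow> real^3" where
  "crs y 0 v = v" | "crs y (Suc k) v = cross3 y (crs y k v)"

fun dcr :: "real^3 \<Rightarrow> real^3 \<Rightarrow> nat \<Rightarrow> real^3 \<Rightarrow> real^3" where
  "dcr y y' 0 v = 0" | "dcr y y' (Suc k) v = cross3 y' (crs y k v) + cross3 y (dcr y y' k v)"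

lemma mpow_mv: "mpow (e *\<^sub>R hat y) k *v v = e ^ k *\<^sub>R crs y k v"
  by (induction k) (auto simp: matrix_vector_mul_assoc[symmetric] scaleR_matrix_vector_assoc[symmetric]
        hat_mv cross_mult_right)

lemma norm_crs: "norm (crs y k v) \<le> norm y ^ k * norm v"
proof (induction k)
  case (Suc k)
  have "norm (crs y (Suc k) v) \<le> norm y * norm (crs y k v)" using norm_cross_le by simp
  also have "\<dots> \<le> norm y * (norm y ^ k * norm v)" using Suc by (simp add: mult_left_mono)
  finally show ?case by (simp add: mult.assoc)
qed simp

lemma norm_dcr: assumes "norm y \<le> K" "norm y' \<le> K"
  shows "norm (dcr y y' k v) \<le> k * K ^ k * norm v"
proof (induction k)
  case (Suc k)
  have K: "K \<ge> 0" using assms(1) norm_ge_zero order_trans by blast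
  have "norm (dcr y y' (Suc k) v) \<le> norm y' * norm (crs y k v) + norm y * norm (dcr y y' k v)"
    using norm_cross_le norm_triangle_le add_mono by (simp add: norm_triangle_le add_mono)
  also have "\<dots> \<le> K * (K ^ k * norm v) + K * (k * K ^ k * norm v)"
    apply (intro add_mono mult_mono)
    using assms Suc K
    apply auto
    using norm_crs[of y k v] mult_right_mono[OF power_mono[OF assms(1), of k], of "norm v"]
    by auto
  also have "\<dots> = Suc k * K ^ Suc k * norm v" by (simp add: algebra_simps)
  finally show ?case .
qed simp

lemma norm_mat_cols: "norm (M::real^3^3) \<le> (\<Sum>i::3\<in>UNIV. \<Sum>j\<in>UNIV. norm (M *v axis j 1))"
proof -
  have "norm M \<le> (\<Sum>i\<in>UNIV. norm (M $ i))" unfolding norm_vec_def by (rule L2_set_le_sum) auto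
  also have "\<dots> \<le> (\<Sum>i\<in>UNIV. \<Sum>j\<in>UNIV. \<bar>M $ i $ j\<bar>)"
    by (intro sum_mono norm_le_l1_cart)
  also have "\<dots> \<le> (\<Sum>i::3\<in>UNIV. \<Sum>j\<in>UNIV. norm (M *v axis j 1))"
  proof (rule sum_mono, rule sum_mono)
    fix i j
    have "M $ i $ j = (M *v axis j 1) $ i"
      by (simp add: matrix_vector_mult_def axis_def if_distrib cong: if_cong)
    then show "\<bar>M $ i $ j\<bar> \<le> norm (M *v axis j 1)" using component_le_norm_cart by metis
  qed
  finally show ?thesis .
qed


lemma summable_expser: "summable (\<lambda>k. c * (x ^ k / fact k))" for x c :: real
  using summable_mult[OF summable_exp[of x], of c] by (simp add: field_simps)

lemma mexp_mv: "mexp (e *\<^sub>R hat y) *v v = (\<Sum>k. (e ^ k / fact k) *\<^sub>R crs y k v)"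
proof -
  let ?B = "e *\<^sub>R hat y"
  have nb: "norm ((1 / fact k) *\<^sub>R mpow ?B k) \<le> 9 * ((\<bar>e\<bar> * norm y) ^ k / fact k)" for k
  proof -
    have "norm (mpow ?B k) \<le> (\<Sum>i::3\<in>UNIV. \<Sum>j\<in>UNIV. norm (mpow ?B k *v axis j 1))"
      by (rule norm_mat_cols)
    also have "\<dots> \<le> (\<Sum>i::3\<in>UNIV. \<Sum>j::3\<in>UNIV. (\<bar>e\<bar> * norm y) ^ k)"
    proof (rule sum_mono, rule sum_mono)
      fix i j :: 3
      have "norm (mpow ?B k *v axis j 1) = \<bar>e\<bar> ^ k * norm (crs y k (axis j 1))"
        by (simp add: mpow_mv power_abs)
      also have "\<dots> \<le> \<bar>e\<bar> ^ k * (norm y ^ k * norm (axis j (1::real)))"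
        by (intro mult_left_mono norm_crs) auto
      finally show "norm (mpow ?B k *v axis j 1) \<le> (\<bar>e\<bar> * norm y) ^ k"
        by (simp add: power_mult_distrib)
    qed
    also have "\<dots> = 9 * (\<bar>e\<bar> * norm y) ^ k" by simp
    finally show ?thesis by (simp add: divide_simps)
  qed
  have sm: "summable (\<lambda>k. (1 / fact k) *\<^sub>R mpow ?B k)"
    by (rule summable_comparison_test'[OF summable_expser[of 9 "\<bar>e\<bar> * norm y"] nb])
  have "mexp ?B *v v = (\<Sum>k. (1 / fact k) *\<^sub>R mpow ?B k *v v)"
    unfolding mexp_def by (rule bounded_linear.suminf[OF bl_mvr sm])
  also have "\<dots> = (\<Sum>k. (e ^ k / fact k) *\<^sub>R crs y k v)"
    by (simp add: scaleR_matrix_vector_assoc[symmetric] mpow_mv)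
  finally show ?thesis .
qed


lemma ps_val0: fixes a :: "nat \<Rightarrow> 'a::banach" shows "(\<Sum>k. (0::real) ^ k *\<^sub>R a k) = a 0"
proof -
  have "(\<lambda>k. (0::real) ^ k *\<^sub>R a k) sums (\<Sum>k\<in>{0}. (0::real) ^ k *\<^sub>R a k)"
    by (rule sums_finite) (auto simp: zero_power scaleR_zero_left)
  thus ?thesis by (simp add: sums_iff)
qed

lemma ps_bound:
  fixes a :: "nat \<Rightarrow> 'a::banach"
  assumes sa: "summable (\<lambda>k. norm (a k))" and e: "\<bar>e\<bar> \<le> 1"
  shows "norm ((\<Sum>k. e ^ k *\<^sub>R a k) - a 0 - e *\<^sub>R a 1) \<le> e\<^sup>2 * (\<Sum>k. norm (a k))"
proof -
  have s1: "summable (\<lambda>k. e ^ k *\<^sub>R a k)"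
    by (rule summable_comparison_test'[OF sa, of 0]) 
       (use e in \<open>auto simp: power_abs intro!: mult_left_le_one_le power_le_one\<close>)
  define h :: "nat \<Rightarrow> 'a" where "h k = (if k = 0 then a 0 else if k = 1 then e *\<^sub>R a 1 else 0)" for k
  have hs: "h sums (\<Sum>k\<in>{0,1}. h k)" by (rule sums_finite) (auto simp: h_def)
  hence hs': "h sums (a 0 + e *\<^sub>R a 1)" by (simp add: h_def)
  have tb: "norm (e ^ k *\<^sub>R a k - h k) \<le> e\<^sup>2 * norm (a k)" for k
  proof (cases "k \<ge> 2")
    case True
    then obtain j where k: "k = j + 2" by (metis add.commute le_Suc_ex)
    have "\<bar>e\<bar> ^ k = \<bar>e\<bar>^j * e\<^sup>2" by (simp add: k power_add power2_eq_square power_abs abs_mult_self_eq)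
    also have "\<dots> \<le> e\<^sup>2" using e by (simp add: mult_left_le_one_le power_le_one)
    finally have "\<bar>e\<bar> ^ k \<le> e\<^sup>2" .
    thus ?thesis using True by (simp add: h_def power_abs mult_right_mono)
  next
    case False
    then have "k = 0 \<or> k = 1" by auto
    thus ?thesis by (auto simp: h_def)
  qed
  have s2: "summable (\<lambda>k. e ^ k *\<^sub>R a k - h k)" using s1 hs' summable_diff sums_summable by blast
  have "(\<Sum>k. e ^ k *\<^sub>R a k) - a 0 - e *\<^sub>R a 1 = (\<Sum>k. e ^ k *\<^sub>R a k - h k)"
    using suminf_diff[OF s1 sums_summable[OF hs']] hs' by (simp add: sums_iff diff_diff_eq)
  also have "norm \<dots> \<le> (\<Sum>k. e\<^sup>2 * norm (a k))"
    by (rule norm_suminf_le[OF tb summable_mult[OF sa]])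
  also have "\<dots> = e\<^sup>2 * (\<Sum>k. norm (a k))" by (rule suminf_mult[OF sa])
  finally show ?thesis .
qed

lemma ps_deriv0:
  fixes a :: "nat \<Rightarrow> 'a::banach"
  assumes sa: "summable (\<lambda>k. norm (a k))"
  shows "((\<lambda>e. \<Sum>k. e ^ k *\<^sub>R a k) has_vector_derivative a 1) (at 0)"
proof -
  define S where "S = (\<Sum>k. norm (a k))"
  have S0: "S \<ge> 0" unfolding S_def by (rule suminf_nonneg[OF sa]) auto
  show ?thesis
    unfolding has_vector_derivative_def has_derivative_at_alt
  proof (intro conjI allI impI)
    show "bounded_linear (\<lambda>h. h *\<^sub>R a 1)" by (rule bounded_linear_scaleR_left)
    fix \<epsilon> :: real assume ep: "\<epsilon> > 0"
    show "\<exists>d>0. \<forall>y. norm (y - 0) < d \<longrightarrow>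
      norm ((\<Sum>k. y ^ k *\<^sub>R a k) - (\<Sum>k. 0 ^ k *\<^sub>R a k) - (y - 0) *\<^sub>R a 1) \<le> \<epsilon> * norm (y - 0)"
    proof (intro exI[of _ "min 1 (\<epsilon> / (S + 1))"] conjI allI impI)
      show "min 1 (\<epsilon> / (S + 1)) > 0" using ep S0 by auto
      fix y :: real assume y: "norm (y - 0) < min 1 (\<epsilon> / (S + 1))"
      have y1: "\<bar>y\<bar> \<le> 1" using y by auto
      have "\<bar>y\<bar> * (S + 1) \<le> \<epsilon>" using y S0 by (auto simp: field_simps)
      hence yS: "\<bar>y\<bar> * S \<le> \<epsilon>" using S0 by (smt (verit) abs_ge_zero mult_left_mono)
      have "norm ((\<Sum>k. y ^ k *\<^sub>R a k) - (\<Sum>k. 0 ^ k *\<^sub>R a k) - (y - 0) *\<^sub>R a 1)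
          = norm ((\<Sum>k. y ^ k *\<^sub>R a k) - a 0 - y *\<^sub>R a 1)" by (simp add: ps_val0)
      also have "\<dots> \<le> y\<^sup>2 * S" unfolding S_def by (rule ps_bound[OF sa y1])
      also have "\<dots> = \<bar>y\<bar> * (\<bar>y\<bar> * S)" by (simp add: power2_eq_square abs_mult_self_eq)
      also have "\<dots> \<le> \<bar>y\<bar> * \<epsilon>" by (rule mult_left_mono[OF yS]) simp
      finally show "norm ((\<Sum>k. y ^ k *\<^sub>R a k) - (\<Sum>k. 0 ^ k *\<^sub>R a k) - (y - 0) *\<^sub>R a 1) \<le> \<epsilon> * norm (y - 0)"
        by (simp add: mult.commute)
    qed
  qed
qed


lemma crs_deriv:
  assumes "(y has_vector_derivative y') (at x within S)"
  shows "((\<lambda>\<tau>. crs (y \<tau>) k v) has_vector_derivative dcr (y x) y' k v) (at x within S)"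
proof (induction k)
  case (Suc k)
  show ?case
    using bounded_bilinear.has_vector_derivative[OF bb_cross assms Suc] by (simp add: add.commute)
qed simp

lemma two_pow_ge: "real k \<le> 2 ^ k"
proof -
  have "k < 2 ^ k" by (rule less_exp)
  hence "real k \<le> real (2 ^ k)" by linarith
  thus ?thesis by simp
qed

lemma Q_deriv:
  assumes dy: "\<forall>\<tau>. (y has_vector_derivative y' \<tau>) (at \<tau>)" and cy': "continuous_on UNIV y'"
  shows "((\<lambda>\<tau>. \<Sum>k. (e ^ k / fact k) *\<^sub>R crs (y \<tau>) k v) has_vector_derivative
           (\<Sum>k. (e ^ k / fact k) *\<^sub>R dcr (y t) (y' t) k v)) (at t)"
proof -
  define S where "S = cball t (1::real)"
  have cy: "continuous_on UNIV y"
    using dy continuous_at_imp_continuous_on has_vector_derivative_continuous by blast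
  obtain K1 where K1: "\<forall>\<tau>\<in>S. norm (y \<tau>) \<le> K1"
    using compact_imp_bounded[OF compact_continuous_image[OF continuous_on_subset[OF cy] compact_cball]]
    unfolding S_def bounded_iff by blast
  obtain K2 where K2: "\<forall>\<tau>\<in>S. norm (y' \<tau>) \<le> K2"
    using compact_imp_bounded[OF compact_continuous_image[OF continuous_on_subset[OF cy'] compact_cball]]
    unfolding S_def bounded_iff by blast
  define K where "K = max K1 K2"
  have Ky: "norm (y \<tau>) \<le> K" "norm (y' \<tau>) \<le> K" if "\<tau> \<in> S" for \<tau>
    using K1 K2 that unfolding K_def by force+
  define f where "f k \<tau> = (e ^ k / fact k) *\<^sub>R crs (y \<tau>) k v" for k \<tau>
  define d where "d k \<tau> = (e ^ k / fact k) *\<^sub>R dcr (y \<tau>) (y' \<tau>) k v" for k \<tau>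
  define D where "D \<tau> = (\<Sum>k. d k \<tau>)" for \<tau>
  have fd: "(f k has_derivative (\<lambda>h. h *\<^sub>R d k x)) (at x within S)" for k x
  proof -
    have "((\<lambda>\<tau>. crs (y \<tau>) k v) has_vector_derivative dcr (y x) (y' x) k v) (at x within S)"
      by (rule crs_deriv) (use dy has_vector_derivative_at_within in blast)
    from bounded_linear.has_vector_derivative[OF bounded_linear_scaleR_right this, of "e ^ k / fact k"]
    show ?thesis unfolding f_def[abs_def] by (simp add: d_def has_vector_derivative_def)
  qed
  have dbound: "norm (d k \<tau>) \<le> (2 * \<bar>e\<bar> * K) ^ k / fact k * norm v" if "\<tau> \<in> S" for k \<tau>
  proof -
    have K0: "K \<ge> 0" using Ky(1)[OF that] norm_ge_zero order_trans by blast
    have "norm (d k \<tau>) = \<bar>e\<bar> ^ k / fact k * norm (dcr (y \<tau>) (y' \<tau>) k v)"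
      by (simp add: d_def power_abs)
    also have "\<dots> \<le> \<bar>e\<bar> ^ k / fact k * (k * K ^ k * norm v)"
      by (intro mult_left_mono norm_dcr Ky that) auto
    also have "\<dots> \<le> \<bar>e\<bar> ^ k / fact k * (2 ^ k * K ^ k * norm v)"
      by (intro mult_left_mono mult_right_mono two_pow_ge) (use K0 in auto)
    also have "\<dots> = (2 * \<bar>e\<bar> * K) ^ k / fact k * norm v"
      by (simp add: power_mult_distrib field_simps)
    finally show ?thesis .
  qed
  have ul: "uniform_limit S (\<lambda>n x. \<Sum>i<n. d i x) D sequentially"
    unfolding D_def
    by (rule Weierstrass_m_test[OF dbound]) (use summable_expser[of "norm v" "2 * \<bar>e\<bar> * K"] in \<open>auto simp: mult.commute\<close>)
  have unif: "\<forall>\<^sub>F n in sequentially. \<forall>x\<in>S. \<forall>h. norm ((\<Sum>i<n. h *\<^sub>R d i x) - h *\<^sub>R D x) \<le> \<epsilon> * norm h"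
    if "\<epsilon> > 0" for \<epsilon>
  proof -
    from ul that have "\<forall>\<^sub>F n in sequentially. \<forall>x\<in>S. dist (\<Sum>i<n. d i x) (D x) < \<epsilon>"
      unfolding uniform_limit_iff by blast
    thus ?thesis
    proof eventually_elim
      case (elim n)
      show ?case
      proof (intro ballI allI)
        fix x h assume "x \<in> S"
        hence "norm ((\<Sum>i<n. d i x) - D x) \<le> \<epsilon>" using elim by (simp add: dist_norm less_imp_le)
        hence "\<bar>h\<bar> * norm ((\<Sum>i<n. d i x) - D x) \<le> \<bar>h\<bar> * \<epsilon>" by (rule mult_left_mono) simp
        thus "norm ((\<Sum>i<n. h *\<^sub>R d i x) - h *\<^sub>R D x) \<le> \<epsilon> * norm h"
          by (simp add: scaleR_sum_right[symmetric] scaleR_diff_right[symmetric] mult.commute)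
      qed
    qed
  qed
  have tS: "t \<in> S" unfolding S_def by simp
  have fsum: "summable (\<lambda>k. f k \<tau>)" for \<tau>
  proof (rule summable_comparison_test'[OF summable_expser[of "norm v" "\<bar>e\<bar> * norm (y \<tau>)"], of 0])
    fix k :: nat
    have "norm (f k \<tau>) = \<bar>e\<bar> ^ k / fact k * norm (crs (y \<tau>) k v)" by (simp add: f_def power_abs)
    also have "\<dots> \<le> \<bar>e\<bar> ^ k / fact k * (norm (y \<tau>) ^ k * norm v)"
      by (intro mult_left_mono norm_crs) auto
    also have "\<dots> = norm v * ((\<bar>e\<bar> * norm (y \<tau>)) ^ k / fact k)" by (simp add: power_mult_distrib)
    finally show "norm (f k \<tau>) \<le> norm v * ((\<bar>e\<bar> * norm (y \<tau>)) ^ k / fact k)" .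
  qed
  obtain g where g: "\<forall>x\<in>S. (\<lambda>n. f n x) sums g x \<and> (g has_derivative (\<lambda>h. h *\<^sub>R D x)) (at x within S)"
    using has_derivative_series[of S f "\<lambda>k x h. h *\<^sub>R d k x" "\<lambda>x h. h *\<^sub>R D x" t, OF convex_cball[of t 1, folded S_def]
      fd unif tS summable_sums[OF fsum]] by blast
  have "t \<in> interior S" unfolding S_def by simp
  hence gd: "(g has_vector_derivative D t) (at t)"
    using g tS at_within_interior unfolding has_vector_derivative_def by metis
  have gd': "(g has_vector_derivative (\<Sum>k. (e ^ k / fact k) *\<^sub>R dcr (y t) (y' t) k v)) (at t)"
    using gd by (simp add: D_def d_def)
  have geq: "g x = (\<Sum>k. (e ^ k / fact k) *\<^sub>R crs (y x) k v)" if "x \<in> ball t 1" for x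
  proof -
    from that have "x \<in> S" unfolding S_def by auto
    thus ?thesis using g sums_unique by (fastforce simp: f_def)
  qed
  show ?thesis
    by (rule has_vector_derivative_transform_within_open[OF gd' open_ball, of t 1]) (auto simp: geq)
qed


lemma Qe_facts:
  assumes dy: "\<forall>\<tau>. (y has_vector_derivative y' \<tau>) (at \<tau>)"
    and dy': "\<forall>\<tau>. (y' has_vector_derivative y'' \<tau>) (at \<tau>)"
  shows "((\<lambda>e. mexp (e *\<^sub>R hat (y t)) *v v) has_vector_derivative cross3 (y t) v) (at 0)"
    and "mexp (0 *\<^sub>R hat (y t)) *v v = v"
    and "((\<lambda>e. vector_derivative (\<lambda>\<tau>. mexp (e *\<^sub>R hat (y \<tau>)) *v v) (at t))
            has_vector_derivative cross3 (y' t) v) (at 0)"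
proof -
  have cy': "continuous_on UNIV y'"
    using dy' continuous_at_imp_continuous_on has_vector_derivative_continuous by blast
  define a where "a k = (1 / fact k) *\<^sub>R crs (y t) k v" for k
  have ea: "mexp (e *\<^sub>R hat (y t)) *v v = (\<Sum>k. e ^ k *\<^sub>R a k)" for e
    by (simp add: mexp_mv a_def)
  have sa: "summable (\<lambda>k. norm (a k))"
  proof (rule summable_comparison_test'[OF summable_expser[of "norm v" "norm (y t)"], of 0])
    fix k :: nat
    have "norm (norm (a k)) = 1 / fact k * norm (crs (y t) k v)" by (simp add: a_def)
    also have "\<dots> \<le> 1 / fact k * (norm (y t) ^ k * norm v)" by (intro mult_left_mono norm_crs) auto
    finally show "norm (norm (a k)) \<le> norm v * (norm (y t) ^ k / fact k)" by (simp add: mult.commute)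
  qed
  show "((\<lambda>e. mexp (e *\<^sub>R hat (y t)) *v v) has_vector_derivative cross3 (y t) v) (at 0)"
    using ps_deriv0[OF sa] by (simp add: ea a_def)
  show "mexp (0 *\<^sub>R hat (y t)) *v v = v"
    using ps_val0[of a] by (simp only: ea) (simp add: a_def)
  define b where "b k = (1 / fact k) *\<^sub>R dcr (y t) (y' t) k v" for k
  have vd: "vector_derivative (\<lambda>\<tau>. mexp (e *\<^sub>R hat (y \<tau>)) *v v) (at t) = (\<Sum>k. e ^ k *\<^sub>R b k)" for e
  proof -
    have "((\<lambda>\<tau>. mexp (e *\<^sub>R hat (y \<tau>)) *v v) has_vector_derivative
           (\<Sum>k. (e ^ k / fact k) *\<^sub>R dcr (y t) (y' t) k v)) (at t)"
      unfolding mexp_mv by (rule Q_deriv[OF dy cy'])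
    from vector_derivative_at[OF this] show ?thesis by (simp add: b_def)
  qed
  define K where "K = max (norm (y t)) (norm (y' t))"
  have sb: "summable (\<lambda>k. norm (b k))"
  proof (rule summable_comparison_test'[OF summable_expser[of "norm v" "2 * K"], of 0])
    fix k :: nat
    have K0: "K \<ge> 0" unfolding K_def by (simp add: le_max_iff_disj)
    have "norm (norm (b k)) = 1 / fact k * norm (dcr (y t) (y' t) k v)" by (simp add: b_def)
    also have "\<dots> \<le> 1 / fact k * (k * K ^ k * norm v)"
      by (intro mult_left_mono norm_dcr) (auto simp: K_def)
    also have "\<dots> \<le> 1 / fact k * (2 ^ k * K ^ k * norm v)"
      by (intro mult_left_mono mult_right_mono two_pow_ge) (use K0 in auto)
    finally show "norm (norm (b k)) \<le> norm v * ((2 * K) ^ k / fact k)"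
      by (simp add: power_mult_distrib mult.commute)
  qed
  show "((\<lambda>e. vector_derivative (\<lambda>\<tau>. mexp (e *\<^sub>R hat (y \<tau>)) *v v) (at t))
            has_vector_derivative cross3 (y' t) v) (at 0)"
    using ps_deriv0[OF sb] by (simp add: vd b_def)
qed


lemma cross_d[derivative_intros]:
  "(f has_vector_derivative f') (at x within S) \<Longrightarrow> (g has_vector_derivative g') (at x within S) \<Longrightarrow>
   ((\<lambda>x. cross3 (f x) (g x)) has_vector_derivative (cross3 (f x) g' + cross3 f' (g x))) (at x within S)"
  by (rule bounded_bilinear.has_vector_derivative[OF bb_cross])

lemma mv_d[derivative_intros]:
  "(f has_vector_derivative f') F \<Longrightarrow> ((\<lambda>x. (M::real^'a^'b) *v f x) has_vector_derivative M *v f') F"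
  by (rule bounded_linear.has_vector_derivative[OF matrix_vector_mul_bounded_linear])

lemma smul_d:
  "(f has_vector_derivative f') (at x within S) \<Longrightarrow> ((\<lambda>x. c *\<^sub>R f x) has_vector_derivative c *\<^sub>R f') (at x within S)"
  by (rule bounded_linear.has_vector_derivative[OF bounded_linear_scaleR_right])

lemma lin_d: "((\<lambda>e. e *\<^sub>R (v::'a::real_normed_vector)) has_vector_derivative v) (at x within S)"
  using has_vector_derivative_scaleR[OF DERIV_ident has_vector_derivative_const[of v]] by simp

lemma sq_d: "((\<lambda>e. (e\<^sup>2 * c) *\<^sub>R f e) has_vector_derivative 0) (at 0)"
  if "(f has_vector_derivative f') (at 0)"
proof -
  have "((\<lambda>e. e\<^sup>2 * c) has_real_derivative 0) (at 0)" by (auto intro!: derivative_eq_intros)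
  from has_vector_derivative_scaleR[OF this that] show ?thesis by simp
qed



lemma derivs:
  fixes n :: nat and m0 g :: real and m l s :: "nat \<Rightarrow> real"
    and dx dx' dx'' du :: "real \<Rightarrow> real^2"
    and xi xi' xi'' dw dw' :: "nat \<Rightarrow> real \<Rightarrow> real^3"
  assumes ddx: "\<forall>t. (dx has_vector_derivative dx' t) (at t)"
    and ddx': "\<forall>t. (dx' has_vector_derivative dx'' t) (at t)"
    and dxi: "\<forall>i\<in>{1..n}. \<forall>t. (xi i has_vector_derivative xi' i t) (at t)"
    and dxi': "\<forall>i\<in>{1..n}. \<forall>t. (xi' i has_vector_derivative xi'' i t) (at t)"
    and ddw: "\<forall>i\<in>{1..n}. \<forall>t. (dw i has_vector_derivative dw' i t) (at t)"
  shows "((\<lambda>\<epsilon>. R_cart n m0 m l s dx xi dw du \<epsilon> t) has_vector_derivative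
            (M00 n m0 m *\<^sub>R dx'' t - (\<Sum>j=1..n. M0 n m l j *v cross3 (s j *\<^sub>R e3) (dw' j t)) - du t)) (at 0)"
    and "i \<in> {1..n} \<Longrightarrow> ((\<lambda>\<epsilon>. R_link n m l g s dx xi dw \<epsilon> i t) has_vector_derivative
            (cross3 (s i *\<^sub>R e3) (Mi0 n m l i *v dx'' t) + Mij n m l i i *\<^sub>R dw' i t
             - (\<Sum>j\<in>{1..n}-{i}. Mij n m l i j *\<^sub>R cross3 (s i *\<^sub>R e3) (cross3 (s j *\<^sub>R e3) (dw' j t)))
             - (Msum n m i * g * l i) *\<^sub>R cross3 (cross3 (xi i t) (s i *\<^sub>R e3)) e3)) (at 0)"
    and "i \<in> {1..n} \<Longrightarrow> ((\<lambda>\<epsilon>. R_kin s xi dw \<epsilon> i t) has_vector_derivative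
            (cross3 (xi' i t) (s i *\<^sub>R e3) - cross3 (dw i t) (s i *\<^sub>R e3))) (at 0)"
proof -
  have Qf: "((\<lambda>\<epsilon>. Qe s xi \<epsilon> j t) has_vector_derivative cross3 (xi j t) (s j *\<^sub>R e3)) (at 0)
       \<and> Qe s xi 0 j t = s j *\<^sub>R e3
       \<and> ((\<lambda>\<epsilon>. vector_derivative (\<lambda>\<tau>. Qe s xi \<epsilon> j \<tau>) (at t)) has_vector_derivative cross3 (xi' j t) (s j *\<^sub>R e3)) (at 0)"
    if j: "j \<in> {1..n}" for j
    using Qe_facts[where y="xi j" and y'="xi' j" and y''="xi'' j" and t=t and v="s j *\<^sub>R e3"] dxi dxi' j unfolding Qe_def by auto
  have HQ: "j \<in> {1..n} \<Longrightarrow> ((\<lambda>\<epsilon>. Qe s xi \<epsilon> j t) has_vector_derivative cross3 (xi j t) (s j *\<^sub>R e3)) (at 0)" for j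
    using Qf by blast
  have Q0: "j \<in> {1..n} \<Longrightarrow> Qe s xi 0 j t = s j *\<^sub>R e3" for j using Qf by blast
  have HD: "j \<in> {1..n} \<Longrightarrow> ((\<lambda>\<epsilon>. vector_derivative (\<lambda>\<tau>. Qe s xi \<epsilon> j \<tau>) (at t)) has_vector_derivative cross3 (xi' j t) (s j *\<^sub>R e3)) (at 0)" for j
    using Qf by blast
  have Xd: "vector_derivative (\<lambda>\<sigma>. Xe dx \<epsilon> \<sigma>) (at \<tau>) = \<epsilon> *\<^sub>R dx' \<tau>" for \<epsilon> \<tau>
    unfolding Xe_def using ddx smul_d vector_derivative_at by blast
  have Xdd: "vector_derivative (\<lambda>\<tau>. vector_derivative (\<lambda>\<sigma>. Xe dx \<epsilon> \<sigma>) (at \<tau>)) (at t) = \<epsilon> *\<^sub>R dx'' t" for \<epsilon>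
    unfolding Xd using ddx' smul_d vector_derivative_at by blast
  have Wd: "j \<in> {1..n} \<Longrightarrow> vector_derivative (\<lambda>\<tau>. We dw \<epsilon> j \<tau>) (at t) = \<epsilon> *\<^sub>R dw' j t" for \<epsilon> j
    unfolding We_def using ddw smul_d vector_derivative_at by blast
  show "((\<lambda>\<epsilon>. R_cart n m0 m l s dx xi dw du \<epsilon> t) has_vector_derivative
            (M00 n m0 m *\<^sub>R dx'' t - (\<Sum>j=1..n. M0 n m l j *v cross3 (s j *\<^sub>R e3) (dw' j t)) - du t)) (at 0)"
  proof -
    have F: "R_cart n m0 m l s dx xi dw du \<epsilon> t = M00 n m0 m *\<^sub>R (\<epsilon> *\<^sub>R dx'' t)
       - (\<Sum>j=1..n. M0 n m l j *v cross3 (Qe s xi \<epsilon> j t) (\<epsilon> *\<^sub>R dw' j t))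
       - ((\<Sum>j=1..n. (\<epsilon>\<^sup>2 * (norm (dw j t))\<^sup>2) *\<^sub>R (M0 n m l j *v Qe s xi \<epsilon> j t)) + \<epsilon> *\<^sub>R du t)" for \<epsilon>
      unfolding R_cart_def res_cart_def Xdd Ue_def
      by (intro arg_cong2[where f="(-)"] arg_cong2[where f="(+)"] refl sum.cong)
         (auto simp: Wd hat_mv We_def power_mult_distrib)
    show ?thesis unfolding F
      apply (rule has_vector_derivative_eq_rhs)
       apply ((rule has_vector_derivative_diff has_vector_derivative_add has_vector_derivative_sum smul_d lin_d mv_d cross_d sq_d HQ | assumption)+)[1]
      apply (simp add: Q0)
      done
  qed
  show "((\<lambda>\<epsilon>. R_link n m l g s dx xi dw \<epsilon> i t) has_vector_derivative
            (cross3 (s i *\<^sub>R e3) (Mi0 n m l i *v dx'' t) + Mij n m l i i *\<^sub>R dw' i t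
             - (\<Sum>j\<in>{1..n}-{i}. Mij n m l i j *\<^sub>R cross3 (s i *\<^sub>R e3) (cross3 (s j *\<^sub>R e3) (dw' j t)))
             - (Msum n m i * g * l i) *\<^sub>R cross3 (cross3 (xi i t) (s i *\<^sub>R e3)) e3)) (at 0)"
    if i: "i \<in> {1..n}"
  proof -
    have F: "R_link n m l g s dx xi dw \<epsilon> i t = 
       cross3 (Qe s xi \<epsilon> i t) (Mi0 n m l i *v (\<epsilon> *\<^sub>R dx'' t)) + Mij n m l i i *\<^sub>R (\<epsilon> *\<^sub>R dw' i t)
       - (\<Sum>j\<in>{1..n}-{i}. Mij n m l i j *\<^sub>R cross3 (Qe s xi \<epsilon> i t) (cross3 (Qe s xi \<epsilon> j t) (\<epsilon> *\<^sub>R dw' j t)))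
       - ((\<Sum>j\<in>{1..n}-{i}. (\<epsilon>\<^sup>2 * (Mij n m l i j * (norm (dw j t))\<^sup>2)) *\<^sub>R cross3 (Qe s xi \<epsilon> i t) (Qe s xi \<epsilon> j t))
          + (Msum n m i * g * l i) *\<^sub>R cross3 (Qe s xi \<epsilon> i t) e3)" for \<epsilon>
      unfolding R_link_def res_link_def Xdd
      by (intro arg_cong2[where f="(-)"] arg_cong2[where f="(+)"] refl sum.cong)
         (auto simp: Wd[OF i] Wd hat_mv We_def power_mult_distrib i)
    have HQi: "((\<lambda>\<epsilon>. Qe s xi \<epsilon> i t) has_vector_derivative cross3 (xi i t) (s i *\<^sub>R e3)) (at 0)"
      using HQ i .
    show ?thesis unfolding F
      apply (rule has_vector_derivative_eq_rhs)
       apply ((rule has_vector_derivative_diff has_vector_derivative_add has_vector_derivative_sum smul_d lin_d mv_d cross_d sq_d HQi HQ has_vector_derivative_const | assumption | erule DiffE)+)[1]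
      apply (simp add: Q0[OF i] Q0)
      done
  qed
  show "((\<lambda>\<epsilon>. R_kin s xi dw \<epsilon> i t) has_vector_derivative
            (cross3 (xi' i t) (s i *\<^sub>R e3) - cross3 (dw i t) (s i *\<^sub>R e3))) (at 0)"
    if i: "i \<in> {1..n}"
  proof -
    have F: "R_kin s xi dw \<epsilon> i t = vector_derivative (\<lambda>\<tau>. Qe s xi \<epsilon> i \<tau>) (at t) - cross3 (\<epsilon> *\<^sub>R dw i t) (Qe s xi \<epsilon> i t)" for \<epsilon>
      unfolding R_kin_def res_kin_def We_def by simp
    show ?thesis unfolding F
      apply (rule has_vector_derivative_eq_rhs)
       apply (rule has_vector_derivative_diff HD[OF i] cross_d lin_d HQ[OF i])+
      apply (simp add: Q0[OF i])
      done
  qed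
qed


lemmas compsimps = vec_eq_iff forall_3 forall_2 matrix_vector_mult_def matrix_matrix_mult_def transpose_def
  sum_2 sum_3 Cmat_def hat_def matrix_def cross3_def e3_def axis_def vector_def inner_axis

lemma inner_e3: "Z \<bullet> e3 = Z $ 3"
  by (simp add: e3_def inner_axis)

lemma V1: "Z \<bullet> e3 = 0 \<Longrightarrow> cross3 (cross3 Z e3) e3 = -Z"
  unfolding inner_e3 by (simp add: compsimps)

lemma V2: "Z \<bullet> e3 = 0 \<Longrightarrow> cross3 e3 (cross3 e3 Z) = -Z"
  unfolding inner_e3 by (simp add: compsimps)

lemma V3: "Z \<bullet> e3 = 0 \<Longrightarrow> Cmat *v (transpose Cmat *v Z) = Z"
  unfolding inner_e3 by (simp add: compsimps)

lemma V6: "Cmat *v (w::real^2) = 0 \<longleftrightarrow> w = 0"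
  unfolding inner_e3 by (simp add: compsimps)

lemma kin_alg: "s \<noteq> 0 \<Longrightarrow> a \<bullet> e3 = 0 \<Longrightarrow> b \<bullet> e3 = 0 \<Longrightarrow>
   (cross3 a (s *\<^sub>R e3) - cross3 b (s *\<^sub>R e3) = 0 \<longleftrightarrow> b = a)"
  unfolding inner_e3 by (auto simp: compsimps)

lemma V4: "r \<noteq> 0 \<Longrightarrow> Cmat *v (Mblk n m0 m l s r 0 *v X) = cross3 (s r *\<^sub>R e3) (Mi0 n m l r *v X)"
  by (simp add: compsimps Mblk_def M0_def Mi0_def algebra_simps)

lemma V5: "c \<noteq> 0 \<Longrightarrow> Z \<bullet> e3 = 0 \<Longrightarrow>
   Mblk n m0 m l s 0 c *v (transpose Cmat *v Z) = - (M0 n m l c *v cross3 (s c *\<^sub>R e3) Z)"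
  by (simp add: compsimps Mblk_def M0_def algebra_simps)


lemma mv_sum: "(M::real^'a^'b) *v (\<Sum>c\<in>A. f c) = (\<Sum>c\<in>A. M *v f c)"
  by (induction A rule: infinite_finite_induct) (auto simp: matrix_vector_right_distrib)

lemma sum_0n: "(\<Sum>c=0..n. f c) = f 0 + (\<Sum>c=1..n. f c)" for f :: "nat \<Rightarrow> 'a::comm_monoid_add"
  by (simp add: sum.atLeast_Suc_atMost)

lemma smat_mv: "(k *\<^sub>R mat 1) *v (x::real^'n) = k *\<^sub>R x"
  by (simp add: scaleR_matrix_vector_assoc[symmetric])

lemma cart_iff:
  assumes Z: "\<forall>j\<in>{1..n}. Z j \<bullet> e3 = 0"
  shows "(M00 n m0 m *\<^sub>R X - (\<Sum>j=1..n. M0 n m l j *v cross3 (s j *\<^sub>R e3) (Z j)) - U = 0) \<longleftrightarrow>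
    ((\<Sum>c=0..n. Mblk n m0 m l s 0 c *v (if c = 0 then X else transpose Cmat *v Z c))
     + (\<Sum>c=0..n. Gblk n m l s g 0 c *v (if c = 0 then Y else transpose Cmat *v Xi c)) = Bblk 0 *v U)"
proof -
  have "(\<Sum>c=1..n. Mblk n m0 m l s 0 c *v (if c = 0 then X else transpose Cmat *v Z c))
      = (\<Sum>c=1..n. - (M0 n m l c *v cross3 (s c *\<^sub>R e3) (Z c)))"
    by (rule sum.cong) (use Z V5 in auto)
  also have "\<dots> = - (\<Sum>j=1..n. M0 n m l j *v cross3 (s j *\<^sub>R e3) (Z j))" by (simp add: sum_negf)
  finally have 1: "(\<Sum>c=0..n. Mblk n m0 m l s 0 c *v (if c = 0 then X else transpose Cmat *v Z c))
      = M00 n m0 m *\<^sub>R X - (\<Sum>j=1..n. M0 n m l j *v cross3 (s j *\<^sub>R e3) (Z j))"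
    by (simp add: sum_0n Mblk_def smat_mv)
  have 2: "(\<Sum>c=0..n. Gblk n m l s g 0 c *v (if c = 0 then Y else transpose Cmat *v Xi c)) = 0"
    by (simp add: Gblk_def)
  show ?thesis unfolding 1 2 by (auto simp: Bblk_def algebra_simps)
qed

lemma link_iff:
  assumes r: "r \<in> {1..n}" and sr: "s r = 1 \<or> s r = -1"
    and Z: "\<forall>j\<in>{1..n}. Z j \<bullet> e3 = 0" and Xi: "Xi r \<bullet> e3 = 0"
  shows "(cross3 (s r *\<^sub>R e3) (Mi0 n m l r *v X) + Mij n m l r r *\<^sub>R Z r
             - (\<Sum>j\<in>{1..n}-{r}. Mij n m l r j *\<^sub>R cross3 (s r *\<^sub>R e3) (cross3 (s j *\<^sub>R e3) (Z j)))
             - (Msum n m r * g * l r) *\<^sub>R cross3 (cross3 (Xi r) (s r *\<^sub>R e3)) e3 = 0) \<longleftrightarrow>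
    ((\<Sum>c=0..n. Mblk n m0 m l s r c *v (if c = 0 then X else transpose Cmat *v Z c))
     + (\<Sum>c=0..n. Gblk n m l s g r c *v (if c = 0 then Y else transpose Cmat *v Xi c)) = Bblk r *v U)"
proof -
  have r0: "r \<noteq> 0" using r by auto
  have ss: "s r * s r = 1" using sr by auto
  define L where "L = cross3 (s r *\<^sub>R e3) (Mi0 n m l r *v X) + Mij n m l r r *\<^sub>R Z r
             - (\<Sum>j\<in>{1..n}-{r}. Mij n m l r j *\<^sub>R cross3 (s r *\<^sub>R e3) (cross3 (s j *\<^sub>R e3) (Z j)))
             - (Msum n m r * g * l r) *\<^sub>R cross3 (cross3 (Xi r) (s r *\<^sub>R e3)) e3"
  define lhs where "lhs = (\<Sum>c=0..n. Mblk n m0 m l s r c *v (if c = 0 then X else transpose Cmat *v Z c))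
     + (\<Sum>c=0..n. Gblk n m l s g r c *v (if c = 0 then Y else transpose Cmat *v Xi c))"
  have A: "Cmat *v (\<Sum>c=1..n. Mblk n m0 m l s r c *v (if c = 0 then X else transpose Cmat *v Z c))
      = (\<Sum>c=1..n. (s r * s c * Mij n m l r c) *\<^sub>R Z c)"
    unfolding mv_sum
    by (rule sum.cong) (use Z r0 V3 in \<open>auto simp: Mblk_def smat_mv matrix_vector_mult_scaleR\<close>)
  also have "\<dots> = Mij n m l r r *\<^sub>R Z r + (\<Sum>c\<in>{1..n}-{r}. (s r * s c * Mij n m l r c) *\<^sub>R Z c)"
    using r by (simp add: sum.remove ss)
  also have "(\<Sum>c\<in>{1..n}-{r}. (s r * s c * Mij n m l r c) *\<^sub>R Z c)
      = - (\<Sum>j\<in>{1..n}-{r}. Mij n m l r j *\<^sub>R cross3 (s r *\<^sub>R e3) (cross3 (s j *\<^sub>R e3) (Z j)))"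
    unfolding sum_negf[symmetric]
    by (rule sum.cong) (use Z V2 in \<open>auto simp: cross_mult_left cross_mult_right\<close>)
  finally have A': "Cmat *v (\<Sum>c=1..n. Mblk n m0 m l s r c *v (if c = 0 then X else transpose Cmat *v Z c))
     = Mij n m l r r *\<^sub>R Z r - (\<Sum>j\<in>{1..n}-{r}. Mij n m l r j *\<^sub>R cross3 (s r *\<^sub>R e3) (cross3 (s j *\<^sub>R e3) (Z j)))"
    by simp
  have G: "(\<Sum>c=0..n. Gblk n m l s g r c *v (if c = 0 then Y else transpose Cmat *v Xi c))
      = (s r * Msum n m r * g * l r) *\<^sub>R (transpose Cmat *v Xi r)"
  proof -
    have "(\<Sum>c=0..n. Gblk n m l s g r c *v (if c = 0 then Y else transpose Cmat *v Xi c))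
        = (\<Sum>c=0..n. if c = r then (s r * Msum n m r * g * l r) *\<^sub>R (transpose Cmat *v Xi r) else 0)"
      by (rule sum.cong) (auto simp: Gblk_def smat_mv r0)
    also have "\<dots> = (s r * Msum n m r * g * l r) *\<^sub>R (transpose Cmat *v Xi r)"
      using r by (simp add: sum.delta)
    finally show ?thesis .
  qed
  have G': "Cmat *v (s r * Msum n m r * g * l r) *\<^sub>R (transpose Cmat *v Xi r)
      = - (Msum n m r * g * l r) *\<^sub>R cross3 (cross3 (Xi r) (s r *\<^sub>R e3)) e3"
    using V1[OF Xi] V3[OF Xi] by (simp add: matrix_vector_mult_scaleR cross_mult_left cross_mult_right)
  have lh: "lhs = Mblk n m0 m l s r 0 *v X
     + (\<Sum>c=1..n. Mblk n m0 m l s r c *v (if c = 0 then X else transpose Cmat *v Z c))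
     + (s r * Msum n m r * g * l r) *\<^sub>R (transpose Cmat *v Xi r)"
    unfolding lhs_def G by (simp add: sum_0n[of _ n])
  have CL: "Cmat *v lhs = L"
    unfolding lh L_def matrix_vector_right_distrib A' G' V4[OF r0]
    by (simp add: algebra_simps)
  have "lhs = Bblk r *v U \<longleftrightarrow> lhs = 0" using r0 by (simp add: Bblk_def)
  also have "\<dots> \<longleftrightarrow> L = 0" using CL V6 by blast
  finally show ?thesis unfolding L_def lhs_def by blast
qed



lemma perp_d: "(\<forall>\<tau>. f \<tau> \<bullet> e3 = 0) \<Longrightarrow> (f has_vector_derivative f') (at t) \<Longrightarrow> f' \<bullet> e3 = 0"
proof -
  assume z: "\<forall>\<tau>. f \<tau> \<bullet> e3 = 0" and d: "(f has_vector_derivative f') (at t)"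
  have "((\<lambda>\<tau>. f \<tau> \<bullet> e3) has_vector_derivative f' \<bullet> e3) (at t)"
    by (rule bounded_linear.has_vector_derivative[OF bounded_linear_inner_left d])
  moreover have "(\<lambda>\<tau>. f \<tau> \<bullet> e3) = (\<lambda>\<tau>. 0)" using z by auto
  ultimately have "((\<lambda>\<tau>. 0::real) has_vector_derivative f' \<bullet> e3) (at t)" by simp
  thus ?thesis using vector_derivative_unique_at[OF _ has_vector_derivative_const] by metis
qed

theorem proposition2:
  fixes n :: nat and m0 g :: real and m l s :: "nat \<Rightarrow> real"
    and dx dx' dx'' du :: "real \<Rightarrow> real^2"
    and xi xi' xi'' dw dw' :: "nat \<Rightarrow> real \<Rightarrow> real^3"
  assumes n: "n \<ge> 1" and m0: "m0 > 0" and g: "g > 0"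
    and ml: "\<forall>i\<in>{1..n}. m i > 0 \<and> l i > 0"
    and s: "\<forall>i\<in>{1..n}. s i = 1 \<or> s i = -1"
    and ddx: "\<forall>t. (dx has_vector_derivative dx' t) (at t)"
    and ddx': "\<forall>t. (dx' has_vector_derivative dx'' t) (at t)"
    and dxi: "\<forall>i\<in>{1..n}. \<forall>t. (xi i has_vector_derivative xi' i t) (at t)"
    and dxi': "\<forall>i\<in>{1..n}. \<forall>t. (xi' i has_vector_derivative xi'' i t) (at t)"
    and ddw: "\<forall>i\<in>{1..n}. \<forall>t. (dw i has_vector_derivative dw' i t) (at t)"
    and xi_perp: "\<forall>i\<in>{1..n}. \<forall>t. xi i t \<bullet> e3 = 0"
    and dw_perp: "\<forall>i\<in>{1..n}. \<forall>t. dw i t \<bullet> e3 = 0"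
  shows
    "(\<forall>t. (\<lambda>\<epsilon>. R_cart n m0 m l s dx xi dw du \<epsilon> t) differentiable (at 0)
        \<and> (\<forall>i\<in>{1..n}. (\<lambda>\<epsilon>. R_link n m l g s dx xi dw \<epsilon> i t) differentiable (at 0)
                      \<and> (\<lambda>\<epsilon>. R_kin s xi dw \<epsilon> i t) differentiable (at 0)))
     \<and>
     ((\<forall>t. vector_derivative (\<lambda>\<epsilon>. R_cart n m0 m l s dx xi dw du \<epsilon> t) (at 0) = 0
        \<and> (\<forall>i\<in>{1..n}. vector_derivative (\<lambda>\<epsilon>. R_link n m l g s dx xi dw \<epsilon> i t) (at 0) = 0
                      \<and> vector_derivative (\<lambda>\<epsilon>. R_kin s xi dw \<epsilon> i t) (at 0) = 0))
      \<longleftrightarrow>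
      (\<forall>t. (\<forall>i\<in>{1..n}. dw i t = xi' i t)
        \<and> (\<forall>r\<in>{0..n}.
             (\<Sum>c = 0..n. Mblk n m0 m l s r c *v
                  (if c = 0 then dx'' t else transpose Cmat *v xi'' c t))
           + (\<Sum>c = 0..n. Gblk n m l s g r c *v
                  (if c = 0 then dx t else transpose Cmat *v xi c t))
           = Bblk r *v du t)))"
proof -
  define Vc where "Vc t = M00 n m0 m *\<^sub>R dx'' t - (\<Sum>j=1..n. M0 n m l j *v cross3 (s j *\<^sub>R e3) (dw' j t)) - du t" for t
  define Vl where "Vl i t = cross3 (s i *\<^sub>R e3) (Mi0 n m l i *v dx'' t) + Mij n m l i i *\<^sub>R dw' i t
             - (\<Sum>j\<in>{1..n}-{i}. Mij n m l i j *\<^sub>R cross3 (s i *\<^sub>R e3) (cross3 (s j *\<^sub>R e3) (dw' j t)))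
             - (Msum n m i * g * l i) *\<^sub>R cross3 (cross3 (xi i t) (s i *\<^sub>R e3)) e3" for i t
  define Vk where "Vk i t = cross3 (xi' i t) (s i *\<^sub>R e3) - cross3 (dw i t) (s i *\<^sub>R e3)" for i t
  note D = derivs[OF ddx ddx' dxi dxi' ddw]
  have Hc: "((\<lambda>\<epsilon>. R_cart n m0 m l s dx xi dw du \<epsilon> t) has_vector_derivative Vc t) (at 0)" for t
    unfolding Vc_def by (rule D(1))
  have Hl: "((\<lambda>\<epsilon>. R_link n m l g s dx xi dw \<epsilon> i t) has_vector_derivative Vl i t) (at 0)"
    if "i \<in> {1..n}" for i t
    unfolding Vl_def by (rule D(2)[OF that])
  have Hk: "((\<lambda>\<epsilon>. R_kin s xi dw \<epsilon> i t) has_vector_derivative Vk i t) (at 0)"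
    if "i \<in> {1..n}" for i t
    unfolding Vk_def by (rule D(3)[OF that])
  have part1: "\<forall>t. (\<lambda>\<epsilon>. R_cart n m0 m l s dx xi dw du \<epsilon> t) differentiable (at 0)
        \<and> (\<forall>i\<in>{1..n}. (\<lambda>\<epsilon>. R_link n m l g s dx xi dw \<epsilon> i t) differentiable (at 0)
                      \<and> (\<lambda>\<epsilon>. R_kin s xi dw \<epsilon> i t) differentiable (at 0))"
    using Hc Hl Hk by (blast intro: differentiableI_vector)
  have LHS: "(\<forall>t. vector_derivative (\<lambda>\<epsilon>. R_cart n m0 m l s dx xi dw du \<epsilon> t) (at 0) = 0
        \<and> (\<forall>i\<in>{1..n}. vector_derivative (\<lambda>\<epsilon>. R_link n m l g s dx xi dw \<epsilon> i t) (at 0) = 0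
                      \<and> vector_derivative (\<lambda>\<epsilon>. R_kin s xi dw \<epsilon> i t) (at 0) = 0))
     \<longleftrightarrow> (\<forall>t. Vc t = 0 \<and> (\<forall>i\<in>{1..n}. Vl i t = 0 \<and> Vk i t = 0))"
    using vector_derivative_at[OF Hc] vector_derivative_at[OF Hl] vector_derivative_at[OF Hk] by auto
  have xi'p: "\<forall>i\<in>{1..n}. \<forall>t. xi' i t \<bullet> e3 = 0"
    using perp_d xi_perp dxi by blast
  have xi''p: "\<forall>i\<in>{1..n}. \<forall>t. xi'' i t \<bullet> e3 = 0"
    using perp_d xi'p dxi' by blast
  have sne: "\<forall>i\<in>{1..n}. s i \<noteq> 0" using s by force
  have kin: "Vk i t = 0 \<longleftrightarrow> dw i t = xi' i t" if "i \<in> {1..n}" for i t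
    unfolding Vk_def using kin_alg sne xi'p dw_perp that by blast
  have dd: "\<forall>i\<in>{1..n}. \<forall>t. dw' i t = xi'' i t" if "\<forall>i\<in>{1..n}. \<forall>t. dw i t = xi' i t"
  proof (intro ballI allI)
    fix i t assume i: "i \<in> {1..n}"
    have "dw i = xi' i" using that i by auto
    thus "dw' i t = xi'' i t" using ddw dxi' i vector_derivative_unique_at by metis
  qed
  have rows: "(Vc t = 0 \<and> (\<forall>i\<in>{1..n}. Vl i t = 0)) \<longleftrightarrow>
     (\<forall>r\<in>{0..n}.
             (\<Sum>c = 0..n. Mblk n m0 m l s r c *v
                  (if c = 0 then dx'' t else transpose Cmat *v xi'' c t))
           + (\<Sum>c = 0..n. Gblk n m l s g r c *v
                  (if c = 0 then dx t else transpose Cmat *v xi c t))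
           = Bblk r *v du t)"
    if dd': "\<forall>i\<in>{1..n}. \<forall>t. dw' i t = xi'' i t" for t
  proof -
    have Z: "\<forall>j\<in>{1..n}. xi'' j t \<bullet> e3 = 0" using xi''p by blast
    have c: "Vc t = 0 \<longleftrightarrow> (\<Sum>c = 0..n. Mblk n m0 m l s 0 c *v
                  (if c = 0 then dx'' t else transpose Cmat *v xi'' c t))
           + (\<Sum>c = 0..n. Gblk n m l s g 0 c *v
                  (if c = 0 then dx t else transpose Cmat *v xi c t))
           = Bblk 0 *v du t"
    proof -
      have "Vc t = M00 n m0 m *\<^sub>R dx'' t - (\<Sum>j=1..n. M0 n m l j *v cross3 (s j *\<^sub>R e3) (xi'' j t)) - du t"
        unfolding Vc_def by (intro arg_cong2[where f="(-)"] refl sum.cong) (use dd' in auto)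
      thus ?thesis using cart_iff[OF Z, where X="dx'' t" and U="du t" and Y="dx t" and Xi="\<lambda>j. xi j t"] by simp
    qed
    have li: "Vl r t = 0 \<longleftrightarrow> (\<Sum>c = 0..n. Mblk n m0 m l s r c *v
                  (if c = 0 then dx'' t else transpose Cmat *v xi'' c t))
           + (\<Sum>c = 0..n. Gblk n m l s g r c *v
                  (if c = 0 then dx t else transpose Cmat *v xi c t))
           = Bblk r *v du t" if r: "r \<in> {1..n}" for r
    proof -
      have "Vl r t = cross3 (s r *\<^sub>R e3) (Mi0 n m l r *v dx'' t) + Mij n m l r r *\<^sub>R xi'' r t
             - (\<Sum>j\<in>{1..n}-{r}. Mij n m l r j *\<^sub>R cross3 (s r *\<^sub>R e3) (cross3 (s j *\<^sub>R e3) (xi'' j t)))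
             - (Msum n m r * g * l r) *\<^sub>R cross3 (cross3 (xi r t) (s r *\<^sub>R e3)) e3"
        unfolding Vl_def by (intro arg_cong2[where f="(-)"] arg_cong2[where f="(+)"] arg_cong2[where f="(*\<^sub>R)"] refl sum.cong) (use dd' r in auto)
      moreover have "s r = 1 \<or> s r = -1" using s r by blast
      moreover have "xi r t \<bullet> e3 = 0" using xi_perp r by blast
      ultimately show ?thesis
        using link_iff[OF r _ Z, where X="dx'' t" and U="du t" and Y="dx t" and Xi="\<lambda>j. xi j t"] by simp
    qed
    have "{0..n} = insert 0 {1..n}" by auto
    then show ?thesis using c li by auto
  qed
  show ?thesis
  proof (intro conjI part1)
    show "(\<forall>t. vector_derivative (\<lambda>\<epsilon>. R_cart n m0 m l s dx xi dw du \<epsilon> t) (at 0) = 0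
        \<and> (\<forall>i\<in>{1..n}. vector_derivative (\<lambda>\<epsilon>. R_link n m l g s dx xi dw \<epsilon> i t) (at 0) = 0
                      \<and> vector_derivative (\<lambda>\<epsilon>. R_kin s xi dw \<epsilon> i t) (at 0) = 0))
      \<longleftrightarrow>
      (\<forall>t. (\<forall>i\<in>{1..n}. dw i t = xi' i t)
        \<and> (\<forall>r\<in>{0..n}.
             (\<Sum>c = 0..n. Mblk n m0 m l s r c *v
                  (if c = 0 then dx'' t else transpose Cmat *v xi'' c t))
           + (\<Sum>c = 0..n. Gblk n m l s g r c *v
                  (if c = 0 then dx t else transpose Cmat *v xi c t))
           = Bblk r *v du t))" (is "_ \<longleftrightarrow> ?R")
      unfolding LHS
    proof
      assume H: "\<forall>t. Vc t = 0 \<and> (\<forall>i\<in>{1..n}. Vl i t = 0 \<and> Vk i t = 0)"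
      have dwx: "\<forall>i\<in>{1..n}. \<forall>t. dw i t = xi' i t" using H kin by blast
      show ?R using rows[OF dd[OF dwx]] H dwx by blast
    next
      assume R: ?R
      have dwx: "\<forall>i\<in>{1..n}. \<forall>t. dw i t = xi' i t" using R by blast
      show "\<forall>t. Vc t = 0 \<and> (\<forall>i\<in>{1..n}. Vl i t = 0 \<and> Vk i t = 0)"
        using rows[OF dd[OF dwx]] R dwx kin by blast
    qed
  qed
qed


end
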